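(* Let $E$ be a set and let $T$ be a set of clauses over $E$, where a clause is a pair written $X\Rightarrow Y$ with $X,Y\subseteq E$, standing for the formula $\bigwedge X\Rightarrow\bigvee Y$. Define the event structure $(E,\vdash_T)$ by: $X\vdash_T Y$ iff for every $Z\subseteq E$ with $(Y\Rightarrow Z)\in T$ we have $X\cap Z\neq\emptyset$. Then the set of left-closed configurations of $(E,\vdash_T)$ equals the set of models of $T$, i.e. the set of $m\subseteq E$ such that for every clause $(X\Rightarrow Y)\in T$, $X\subseteq m$ implies $Y\cap m\neq\emptyset$.
   Context: An event structure is a pair $(E,\vdash)$ with $\vdash\subseteq\mathcal{P}(E)\times\mathcal{P}(E)$. A set $X\subseteq E$ is a left-closed configuration iff for every $Y\subseteq X$ there exists $Z\subseteq X$ with $Z\vdash Y$. *)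

theory Defs
  imports Main
begin

definition left_closed_config :: "'a set \<Rightarrow> ('a set \<Rightarrow> 'a set \<Rightarrow> bool) \<Rightarrow> 'a set \<Rightarrow> bool" where
  "left_closed_config E ent X \<longleftrightarrow> X \<subseteq> E \<and> (\<forall>Y. Y \<subseteq> X \<longrightarrow> (\<exists>Z. Z \<subseteq> X \<and> ent Z Y))"

definition clause_entails :: "'a set \<Rightarrow> ('a set \<times> 'a set) set \<Rightarrow> 'a set \<Rightarrow> 'a set \<Rightarrow> bool" where
  "clause_entails E T X Y \<longleftrightarrow> (\<forall>Z. Z \<subseteq> E \<longrightarrow> (Y, Z) \<in> T \<longrightarrow> X \<inter> Z \<noteq> {})"

definition models :: "'a set \<Rightarrow> ('a set \<times> 'a set) set \<Rightarrow> 'a set set" where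
  "models E T = {m. m \<subseteq> E \<and> (\<forall>X Y. (X, Y) \<in> T \<longrightarrow> X \<subseteq> m \<longrightarrow> Y \<inter> m \<noteq> {})}"

end

theory Submission
  imports Defs
begin

theorem mainTheorem4:
  fixes E :: "'a set" and T :: "('a set \<times> 'a set) set"
  assumes "\<forall>(X, Y) \<in> T. X \<subseteq> E \<and> Y \<subseteq> E"
  shows "{X. left_closed_config E (clause_entails E T) X} = models E T"
proof (intro set_eqI iffI)
  fix m assume "m \<in> {X. left_closed_config E (clause_entails E T) X}"
  hence m: "m \<subseteq> E" "\<And>Y. Y \<subseteq> m \<Longrightarrow> \<exists>Z. Z \<subseteq> m \<and> clause_entails E T Z Y"
    by (auto simp: left_closed_config_def)
  show "m \<in> models E T"
    unfolding models_def
  proof (intro CollectI conjI allI impI m(1))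
    fix X Y assume XY: "(X, Y) \<in> T" "X \<subseteq> m"
    obtain Z where "Z \<subseteq> m" "clause_entails E T Z X" using m(2)[OF XY(2)] by blast
    moreover have "Y \<subseteq> E" using assms XY by blast
    hence "Z \<inter> Y \<noteq> {}" using XY calculation unfolding clause_entails_def by blast
    ultimately show "Y \<inter> m \<noteq> {}" by blast
  qed
next
  fix m assume "m \<in> models E T"
  hence m: "m \<subseteq> E" "\<And>X Y. (X, Y) \<in> T \<Longrightarrow> X \<subseteq> m \<Longrightarrow> Y \<inter> m \<noteq> {}"
    by (auto simp: models_def)
  have "\<And>Y. Y \<subseteq> m \<Longrightarrow> clause_entails E T m Y"
    unfolding clause_entails_def using m(2) by (simp add: Int_commute)
  thus "m \<in> {X. left_closed_config E (clause_entails E T) X}"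
    unfolding left_closed_config_def using m(1) by blast
qed

end
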